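(* For any $\alpha\ge1$ and $\beta\ge1$, there exist a finite set $\mathcal{N}$ of $n$ agents, a finite set $\mathcal{M}$ of feasible centers, a positive integer $k$, a pseudometric $d^m$ on $\mathcal{N}$ and a function $d^c:\mathcal{N}\times\mathcal{M}\to\mathbb{R}_{\ge0}$ (a centroid metric, possibly unrelated to $d^m$) such that no clustering is both $\alpha$-FJR with respect to the centroid loss $\ell_i(C,x)=d^c(i,x)$ and $\beta$-FJR with respect to the non-centroid loss $\ell_i(C,x)=\max_{j\in C}d^m(i,j)$.
   Context: Given losses $\ell_i(C,x)\ge0$ for $i\in C\subseteq\mathcal{N}$, $x\in\mathcal{M}$: a clustering is $\mathcal{X}=\{(C_1,x_1),\dots,(C_k,x_k)\}$ with $C_t$ pairwise disjoint subsets of $\mathcal{N}$ (some possibly empty), union $\mathcal{N}$, $x_t\in\mathcal{M}$; $\ell_i(\mathcal{X})=\ell_i(C_t,x_t)$ where $i\in C_t$. For $\alpha\ge1$, $\mathcal{X}$ is $\alpha$-FJR (with respect to the losses $\ell_i$) if there is no $S\subseteq\mathcal{N}$ with $|S|\ge n/k$ and $y\in\mathcal{M}$ with $\alpha\,\ell_i(S,y)<\min_{j\in S}\ell_j(\mathcal{X})$ for all $i\in S$. *)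

theory Defs
  imports Main "HOL.Real"
begin

text \<open>A clustering with k (possibly empty) clusters is represented by two
  functions: C t is the t-th cluster and x t its center, for t < k.\<close>

definition is_clustering ::
  "'a set \<Rightarrow> 'b set \<Rightarrow> nat \<Rightarrow> (nat \<Rightarrow> 'a set) \<Rightarrow> (nat \<Rightarrow> 'b) \<Rightarrow> bool" where
  "is_clustering N M k C x \<longleftrightarrow>
     (\<forall>t<k. C t \<subseteq> N \<and> x t \<in> M) \<and>
     (\<forall>s<k. \<forall>t<k. s \<noteq> t \<longrightarrow> C s \<inter> C t = {}) \<and>
     (\<Union>t<k. C t) = N"

definition clust_loss ::
  "('a \<Rightarrow> 'a set \<Rightarrow> 'b \<Rightarrow> real) \<Rightarrow> nat \<Rightarrow> (nat \<Rightarrow> 'a set) \<Rightarrow> (nat \<Rightarrow> 'b) \<Rightarrow> 'a \<Rightarrow> real" where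
  "clust_loss l k C x i = (let t = (THE t. t < k \<and> i \<in> C t) in l i (C t) (x t))"

definition is_FJR ::
  "'a set \<Rightarrow> 'b set \<Rightarrow> nat \<Rightarrow> ('a \<Rightarrow> 'a set \<Rightarrow> 'b \<Rightarrow> real) \<Rightarrow> real
     \<Rightarrow> (nat \<Rightarrow> 'a set) \<Rightarrow> (nat \<Rightarrow> 'b) \<Rightarrow> bool" where
  "is_FJR N M k l \<alpha> C x \<longleftrightarrow>
     \<not> (\<exists>S. S \<subseteq> N \<and> S \<noteq> {} \<and> real (card S) \<ge> real (card N) / real k \<and>
          (\<exists>y\<in>M. \<forall>i\<in>S. \<alpha> * l i S y < Min (clust_loss l k C x ` S)))"

definition pseudometric_on :: "'a set \<Rightarrow> ('a \<Rightarrow> 'a \<Rightarrow> real) \<Rightarrow> bool" where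
  "pseudometric_on N d \<longleftrightarrow>
     (\<forall>i\<in>N. d i i = 0) \<and>
     (\<forall>i\<in>N. \<forall>j\<in>N. d i j \<ge> 0 \<and> d i j = d j i) \<and>
     (\<forall>i\<in>N. \<forall>j\<in>N. \<forall>h\<in>N. d i h \<le> d i j + d j h)"

definition centroid_loss :: "('a \<Rightarrow> 'b \<Rightarrow> real) \<Rightarrow> 'a \<Rightarrow> 'a set \<Rightarrow> 'b \<Rightarrow> real" where
  "centroid_loss dc i C x = dc i x"

definition noncentroid_loss :: "('a \<Rightarrow> 'a \<Rightarrow> real) \<Rightarrow> 'a \<Rightarrow> 'a set \<Rightarrow> 'b \<Rightarrow> real" where
  "noncentroid_loss dm i C x = Max ((\<lambda>j. dm i j) ` C)"

end

theory Submission
  imports Defs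
begin

lemma clust_loss_eq:
  assumes "is_clustering N M k C x" "t < k" "i \<in> C t"
  shows "clust_loss l k C x i = l i (C t) (x t)"
proof -
  have "(THE t. t < k \<and> i \<in> C t) = t"
  proof (rule the_equality)
    show "t < k \<and> i \<in> C t" using assms by auto
  next
    fix s assume "s < k \<and> i \<in> C s"
    then show "s = t" using assms unfolding is_clustering_def by blast
  qed
  then show ?thesis unfolding clust_loss_def by simp
qed

lemma in_some_cluster:
  assumes "is_clustering N M k C x" "i \<in> N"
  shows "\<exists>t<k. i \<in> C t"
  using assms unfolding is_clustering_def by blast

definition dm0 :: "nat \<Rightarrow> nat \<Rightarrow> real" where
  "dm0 i j = (if i div 2 = j div 2 then 0 else 1)"

definition dc0 :: "nat \<Rightarrow> nat \<Rightarrow> real" where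
  "dc0 i y = (if i = 0 then (if y < 2 then 0 else 1)
             else if i = 1 then (if y < 2 then 1 else 0)
             else if i = 2 then (if even y then 0 else 1)
             else (if even y then 1 else 0))"

lemma pm: "pseudometric_on {0..3} dm0"
  unfolding pseudometric_on_def dm0_def by auto

theorem mainTheorem13:
  fixes \<alpha> \<beta> :: real
  assumes "\<alpha> \<ge> 1" and "\<beta> \<ge> 1"
  shows "\<exists>(N :: nat set) (M :: nat set) (k :: nat) (dm :: nat \<Rightarrow> nat \<Rightarrow> real)
            (dc :: nat \<Rightarrow> nat \<Rightarrow> real).
           finite N \<and> N \<noteq> {} \<and> finite M \<and> M \<noteq> {} \<and> k > 0 \<and>
           pseudometric_on N dm \<and> (\<forall>i\<in>N. \<forall>y\<in>M. dc i y \<ge> 0) \<and>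
           (\<forall>C x. is_clustering N M k C x \<longrightarrow>
              \<not> (is_FJR N M k (centroid_loss dc) \<alpha> C x \<and>
                 is_FJR N M k (noncentroid_loss dm) \<beta> C x))"
proof -
  let ?N = "{0..3::nat}"
  let ?M = "{0..3::nat}"
  have main: "\<not> (is_FJR ?N ?M 2 (centroid_loss dc0) \<alpha> C x \<and>
                 is_FJR ?N ?M 2 (noncentroid_loss dm0) \<beta> C x)"
    if cl: "is_clustering ?N ?M 2 C x" for C x
  proof
    assume H: "is_FJR ?N ?M 2 (centroid_loss dc0) \<alpha> C x \<and>
                 is_FJR ?N ?M 2 (noncentroid_loss dm0) \<beta> C x"
    have Cs: "\<And>t. t < 2 \<Longrightarrow> C t \<subseteq> ?N" and xs: "\<And>t. t < 2 \<Longrightarrow> x t \<in> ?M"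
      using cl unfolding is_clustering_def by auto
    have disj: "\<And>s t. s < 2 \<Longrightarrow> t < 2 \<Longrightarrow> s \<noteq> t \<Longrightarrow> C s \<inter> C t = {}"
      using cl unfolding is_clustering_def by auto
    have un: "C 0 \<union> C 1 = ?N"
    proof -
      have "(\<Union>t<2. C t) = ?N" using cl unfolding is_clustering_def by auto
      moreover have "{..<2::nat} = {0,1}" by auto
      ultimately show ?thesis by auto
    qed
    define T where "T i = (SOME t. t < 2 \<and> i \<in> C t)" for i
    have T: "T i < 2 \<and> i \<in> C (T i)" if "i \<in> ?N" for i
      unfolding T_def by (rule someI_ex) (use in_some_cluster[OF cl that] in blast)
    define Lm where "Lm i = Max (dm0 i ` C (T i))" for i
    define Lc where "Lc i = dc0 i (x (T i))" for i
    have Lm: "clust_loss (noncentroid_loss dm0) 2 C x i = Lm i" if "i \<in> ?N" for i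
      using clust_loss_eq[OF cl, of "T i" i] T[OF that]
      unfolding Lm_def noncentroid_loss_def by simp
    have Lc: "clust_loss (centroid_loss dc0) 2 C x i = Lc i" if "i \<in> ?N" for i
      using clust_loss_eq[OF cl, of "T i" i] T[OF that]
      unfolding Lc_def centroid_loss_def by simp
    have H1: "\<And>S y. S \<subseteq> ?N \<Longrightarrow> S \<noteq> {} \<Longrightarrow> real (card S) \<ge> 2 \<Longrightarrow> y \<in> ?M \<Longrightarrow>
        \<not> (\<forall>i\<in>S. \<beta> * noncentroid_loss dm0 i S y < Min (clust_loss (noncentroid_loss dm0) 2 C x ` S))"
      using H unfolding is_FJR_def by auto
    have H2: "\<And>S y. S \<subseteq> ?N \<Longrightarrow> S \<noteq> {} \<Longrightarrow> real (card S) \<ge> 2 \<Longrightarrow> y \<in> ?M \<Longrightarrow>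
        \<not> (\<forall>i\<in>S. \<alpha> * centroid_loss dc0 i S y < Min (clust_loss (centroid_loss dc0) 2 C x ` S))"
      using H unfolding is_FJR_def by auto
    have nc: "Lm a \<le> 0 \<or> Lm b \<le> 0" if "a \<in> ?N" "b \<in> ?N" "a \<noteq> b" "a div 2 = b div 2" for a b
    proof (rule ccontr)
      assume "\<not> (Lm a \<le> 0 \<or> Lm b \<le> 0)"
      then have pos: "Lm a > 0" "Lm b > 0" by auto
      have z: "noncentroid_loss dm0 i {a,b} 0 = 0" if "i \<in> {a,b}" for i
        using that \<open>a div 2 = b div 2\<close> unfolding noncentroid_loss_def dm0_def by auto
      have "Min (clust_loss (noncentroid_loss dm0) 2 C x ` {a,b}) = min (Lm a) (Lm b)"
        using Lm that by simp
      note mn = this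
      have "\<forall>i\<in>{a,b}. \<beta> * noncentroid_loss dm0 i {a,b} 0 < Min (clust_loss (noncentroid_loss dm0) 2 C x ` {a,b})"
      proof
        fix i assume i: "i \<in> {a,b}"
        show "\<beta> * noncentroid_loss dm0 i {a,b} 0 < Min (clust_loss (noncentroid_loss dm0) 2 C x ` {a,b})"
          unfolding mn z[OF i] using pos by simp
      qed
      moreover have "{a,b} \<subseteq> ?N" "{a,b} \<noteq> {}" "real (card {a,b}) \<ge> 2" "(0::nat) \<in> ?M"
        using that by auto
      ultimately show False using H1[of "{a,b}" 0] by blast
    qed
    have sub: "C (T a) \<subseteq> {j. j \<in> ?N \<and> j div 2 = a div 2}" if "a \<in> ?N" "Lm a \<le> 0" for a
    proof
      fix j assume j: "j \<in> C (T a)"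
      have fin: "finite (C (T a))" using Cs[of "T a"] T[OF that(1)] finite_subset by blast
      have "dm0 a j \<le> Lm a" unfolding Lm_def using j fin by (intro Max_ge) auto
      then have "dm0 a j = 0" using that dm0_def by (auto split: if_splits)
      then show "j \<in> {j. j \<in> ?N \<and> j div 2 = a div 2}"
        using j Cs[of "T a"] T[OF that(1)] unfolding dm0_def by (auto split: if_splits)
    qed
    obtain a where a: "a \<in> {0,1}" "Lm a \<le> 0" using nc[of 0 1] by auto
    obtain b where b: "b \<in> {2,3}" "Lm b \<le> 0" using nc[of 2 3] by auto
    have e01: "{j. j \<in> ?N \<and> j div 2 = 0} = {0,1}" by (auto; presburger)
    have e23: "{j. j \<in> ?N \<and> j div 2 = 1} = {2,3}" by (auto; presburger)
    have ad: "a div 2 = 0" "a \<in> ?N" using a(1) by auto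
    have bd: "b div 2 = 1" "b \<in> ?N" using b(1) by auto
    have Ca: "C (T a) \<subseteq> {0,1}" using sub[OF ad(2) a(2)] unfolding ad(1) e01 .
    have Cb: "C (T b) \<subseteq> {2,3}" using sub[OF bd(2) b(2)] unfolding bd(1) e23 .
    have Ta: "T a < 2" "a \<in> C (T a)" using T[of a] a by auto
    have Tb: "T b < 2" "b \<in> C (T b)" using T[of b] b by auto
    have neq: "T a \<noteq> T b"
    proof
      assume "T a = T b"
      then have "b \<in> {0,1}" using Tb(2) Ca by (metis subsetD)
      then show False using b(1) by auto
    qed
    have TT: "(T a = 0 \<and> T b = 1) \<or> (T a = 1 \<and> T b = 0)" using Ta(1) Tb(1) neq by linarith
    have U: "C (T a) \<union> C (T b) = ?N" using TT un by (elim disjE) (simp_all add: Un_commute)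
    have Ca': "C (T a) = {0,1}"
    proof
      show "{0,1} \<subseteq> C (T a)"
      proof
        fix j :: nat assume j: "j \<in> {0,1}"
        then have "j \<in> ?N" by auto
        then have "j \<in> C (T a) \<union> C (T b)" using U by simp
        moreover have "j \<notin> C (T b)" using Cb j by auto
        ultimately show "j \<in> C (T a)" by blast
      qed
    qed (rule Ca)
    have Cb': "C (T b) = {2,3}"
    proof
      show "{2,3} \<subseteq> C (T b)"
      proof
        fix j :: nat assume j: "j \<in> {2,3}"
        then have "j \<in> ?N" by auto
        then have "j \<in> C (T a) \<union> C (T b)" using U by simp
        moreover have "j \<notin> C (T a)" using Ca j by auto
        ultimately show "j \<in> C (T b)" by blast
      qed
    qed (rule Cb)
    define y where "y = x (T a)"
    define z where "z = x (T b)"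
    have L0: "Lc 0 = dc0 0 y" using Lc clust_loss_eq[OF cl Ta(1), of 0] Ca' Lc[of 0]
      unfolding y_def centroid_loss_def by auto
    have L1: "Lc 1 = dc0 1 y" using clust_loss_eq[OF cl Ta(1), of 1] Ca' Lc[of 1]
      unfolding y_def centroid_loss_def by auto
    have L2: "Lc 2 = dc0 2 z" using clust_loss_eq[OF cl Tb(1), of 2] Cb' Lc[of 2]
      unfolding z_def centroid_loss_def by auto
    have L3: "Lc 3 = dc0 3 z" using clust_loss_eq[OF cl Tb(1), of 3] Cb' Lc[of 3]
      unfolding z_def centroid_loss_def by auto
    have cen: "Lc p \<le> 0 \<or> Lc q \<le> 0" if "p \<in> {0,1}" "q \<in> {2,3}" for p q
    proof -
      define w where "w = 2 * p + (q - 2)"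
      have w: "w \<in> ?M" using that unfolding w_def by auto
      show ?thesis
      proof (rule ccontr)
        assume "\<not> (Lc p \<le> 0 \<or> Lc q \<le> 0)"
        then have pos: "Lc p > 0" "Lc q > 0" by auto
        have z: "centroid_loss dc0 i {p,q} w = 0" if "i \<in> {p,q}" for i
          using that \<open>p \<in> {0,1}\<close> \<open>q \<in> {2,3}\<close> unfolding centroid_loss_def dc0_def w_def by auto
        have "Min (clust_loss (centroid_loss dc0) 2 C x ` {p,q}) = min (Lc p) (Lc q)"
          using Lc that by auto
        note mn = this
        have "\<forall>i\<in>{p,q}. \<alpha> * centroid_loss dc0 i {p,q} w < Min (clust_loss (centroid_loss dc0) 2 C x ` {p,q})"
        proof
          fix i assume i: "i \<in> {p,q}"
          show "\<alpha> * centroid_loss dc0 i {p,q} w < Min (clust_loss (centroid_loss dc0) 2 C x ` {p,q})"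
            unfolding mn z[OF i] using pos by simp
        qed
        moreover have "p \<noteq> q" using that by auto
        moreover have "{p,q} \<subseteq> ?N" using that by auto
        ultimately show False using H2[of "{p,q}" w] w by auto
      qed
    qed
    have "dc0 0 y + dc0 1 y = 1" "dc0 2 z + dc0 3 z = 1"
      "dc0 0 y \<ge> 0" "dc0 1 y \<ge> 0" "dc0 2 z \<ge> 0" "dc0 3 z \<ge> 0"
      unfolding dc0_def by auto
    moreover have "Lc 0 \<le> 0 \<or> Lc 2 \<le> 0" "Lc 0 \<le> 0 \<or> Lc 3 \<le> 0"
      "Lc 1 \<le> 0 \<or> Lc 2 \<le> 0" "Lc 1 \<le> 0 \<or> Lc 3 \<le> 0"
      using cen[of 0 2] cen[of 0 3] cen[of 1 2] cen[of 1 3] by simp_all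
    ultimately show False unfolding L0 L1 L2 L3 by linarith
  qed
  have "finite ?N \<and> ?N \<noteq> {} \<and> finite ?M \<and> ?M \<noteq> {} \<and> (2::nat) > 0 \<and>
           pseudometric_on ?N dm0 \<and> (\<forall>i\<in>?N. \<forall>y\<in>?M. dc0 i y \<ge> 0) \<and>
           (\<forall>C x. is_clustering ?N ?M 2 C x \<longrightarrow>
              \<not> (is_FJR ?N ?M 2 (centroid_loss dc0) \<alpha> C x \<and>
                 is_FJR ?N ?M 2 (noncentroid_loss dm0) \<beta> C x))"
    using pm main by (auto simp: dc0_def)
  then show ?thesis by blast
qed

end
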